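(* Assume $abcd\neq0$. For every $\omega$ on the unit circle, \[T(\omega)=\frac{|a|^2}{|a|^2+|b|^2{\zeta'_M}^2},\qquad R(\omega)=\frac{|b|^2{\zeta'_M}^2}{|a|^2+|b|^2{\zeta'_M}^2},\] so in particular $T(\omega)+R(\omega)=1$.
   Context: Setting: $M\ge1$, $C=\begin{bmatrix} a&b\\ c&d\end{bmatrix}$ a $2\times2$ unitary matrix, $\Delta=\det C$; $|L\rangle=(1,0)^\top$, $|R\rangle=(0,1)^\top$; $\Gamma_M=\{0,\dots,M-1\}$. $E_M$ is the linear map on $\ell^2(\Gamma_M;\mathbb{C}^2)$ with $(E_M\varphi)(x)=P\varphi(x+1)+Q\varphi(x-1)$, $\varphi(-1)=\varphi(M)=0$, $P=\begin{bmatrix} a&b\\0&0\end{bmatrix}$, $Q=\begin{bmatrix}0&0\\c&d\end{bmatrix}$. For $\xi\in\mathbb{R}$, $z=e^{-i\xi}$, let $\varphi$ be the unique solution of $(z-E_M)\varphi=\delta_0|R\rangle$, and write $\varphi(x;L)=\langle L|\varphi(x)\rangle$, $\varphi(x;R)=\langle R|\varphi(x)\rangle$. Fix a square root $\Delta^{1/2}$ and set $\omega=\Delta^{-1/2}z$ (on the unit circle). The transmission and reflection rates are $T(\omega)=|d\,\varphi(M-1;R)|^2$ and $R(\omega)=|a\,\varphi(0;L)+b\,\varphi(0;R)|^2$. Put $x(\omega)=\frac{\omega+\omega^{-1}}{2|a|}$ and $\zeta'_m=U_{m-1}(x(\omega))$, $U_m$ the Chebyshev polynomials of the second kind ($U_{-1}=0$,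 $U_0=1$, $U_{m+1}(t)=2tU_m(t)-U_{m-1}(t)$). *)

theory Defs
  imports "HOL-Analysis.Analysis"
begin

definition adj2 :: "complex^2^2 \<Rightarrow> complex^2^2" where
  "adj2 C = (\<chi> i j. cnj (C $ j $ i))"

definition unitary2 :: "complex^2^2 \<Rightarrow> bool" where
  "unitary2 C \<longleftrightarrow> adj2 C ** C = mat 1 \<and> C ** adj2 C = mat 1"

text \<open>Basis vector |R> = (0,1); <L|v> = v$1, <R|v> = v$2.\<close>
definition ketR :: "complex^2" where "ketR = (\<chi> i. if i = 2 then 1 else 0)"

definition Pm :: "complex^2^2 \<Rightarrow> complex^2^2" where
  "Pm C = (\<chi> i j. if i = 1 then C $ i $ j else 0)"
definition Qm :: "complex^2^2 \<Rightarrow> complex^2^2" where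
  "Qm C = (\<chi> i j. if i = 2 then C $ i $ j else 0)"

text \<open>Elements of l^2(Gamma_M; C^2) are represented as functions int => complex^2;
  only the values on Gamma_M = {0..M-1} matter; outside they are read as 0
  (boundary condition phi(-1) = phi(M) = 0).\<close>
definition ext0 :: "nat \<Rightarrow> (int \<Rightarrow> complex^2) \<Rightarrow> int \<Rightarrow> complex^2" where
  "ext0 M \<phi> y = (if 0 \<le> y \<and> y < int M then \<phi> y else 0)"

definition EM :: "nat \<Rightarrow> complex^2^2 \<Rightarrow> (int \<Rightarrow> complex^2) \<Rightarrow> int \<Rightarrow> complex^2" where
  "EM M C \<phi> x = Pm C *v ext0 M \<phi> (x + 1) + Qm C *v ext0 M \<phi> (x - 1)"

text \<open>Chebyshev polynomials of the second kind, shifted: chebU' m t = U_{m-1}(t),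
  so chebU' 0 = U_{-1} = 0, chebU' 1 = U_0 = 1.\<close>
fun chebU' :: "nat \<Rightarrow> complex \<Rightarrow> complex" where
  "chebU' 0 t = 0"
| "chebU' (Suc 0) t = 1"
| "chebU' (Suc (Suc m)) t = 2 * t * chebU' (Suc m) t - chebU' m t"

end

theory Submission
  imports Defs
begin

lemma unitary_facts:
  assumes "unitary2 C"
  shows "C$1$1 * cnj (C$1$1) + C$1$2 * cnj (C$1$2) = 1"
    "C$2$1 * cnj (C$1$1) + C$2$2 * cnj (C$1$2) = 0"
    "C$2$1 * cnj (C$2$1) + C$2$2 * cnj (C$2$2) = 1"
proof -
  have E: "C ** adj2 C = mat 1" using assms unfolding unitary2_def by simp
  have X: "(C ** adj2 C)$i$j = C$i$1 * cnj (C$j$1) + C$i$2 * cnj (C$j$2)" for i j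
    by (simp add: matrix_matrix_mult_def adj2_def sum_2)
  have Y: "(C ** adj2 C)$i$j = (if i = j then 1 else 0)" for i j
    by (simp add: E mat_def)
  have n21: "(2::2) \<noteq> 1" by simp
  show "C$1$1 * cnj (C$1$1) + C$1$2 * cnj (C$1$2) = 1"
    using X[of 1 1] Y[of 1 1] by simp
  show "C$2$1 * cnj (C$1$1) + C$2$2 * cnj (C$1$2) = 0"
    using X[of 2 1] Y[of 2 1] n21 by simp
  show "C$2$1 * cnj (C$2$1) + C$2$2 * cnj (C$2$2) = 1"
    using X[of 2 2] Y[of 2 2] by simp
qed

lemma Pm_comp: "(Pm C *v w)$1 = C$1$1 * w$1 + C$1$2 * w$2" "(Pm C *v w)$2 = 0"
  by (simp_all add: Pm_def matrix_vector_mult_def sum_2)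
lemma Qm_comp: "(Qm C *v w)$2 = C$2$1 * w$1 + C$2$2 * w$2" "(Qm C *v w)$1 = 0"
  by (simp_all add: Qm_def matrix_vector_mult_def sum_2)

fun chebR :: "nat \<Rightarrow> real \<Rightarrow> real" where
  "chebR 0 t = 0"
| "chebR (Suc 0) t = 1"
| "chebR (Suc (Suc m)) t = 2 * t * chebR (Suc m) t - chebR m t"

lemma chebU'_real: "chebU' n (of_real r) = of_real (chebR n r)"
  by (induction n r rule: chebR.induct) auto

lemma cassini: "(chebR (Suc n) t)^2 - 2*t*chebR (Suc n) t * chebR n t + (chebR n t)^2 = 1"
proof (induction n)
  case 0 then show ?case by simp
next
  case (Suc n)
  then show ?case by (simp add: power2_eq_square algebra_simps)
qed

lemma gen3: fixes Y3 x Y2 Y1 A3 A2 A1 A0 y1 y0 :: complex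
  shows "Y3 = 2*x*Y2 - Y1 \<Longrightarrow> A3 = 2*x*A2 - A1 \<Longrightarrow> A2 = 2*x*A1 - A0 \<Longrightarrow>
    Y1 = A1*y1 - A0*y0 \<Longrightarrow> Y2 = A2 * y1 - A1*y0 \<Longrightarrow> Y3 = A3*y1 - A2*y0"
  by algebra

lemma twoterm:
  fixes y :: "nat \<Rightarrow> complex"
  assumes "\<And>n. n + 2 \<le> M \<Longrightarrow> y (n+2) = 2*x*y (n+1) - y n"
  shows "n + 1 \<le> M \<Longrightarrow> y (n+1) = chebU' (n+1) x * y 1 - chebU' n x * y 0"
proof (induction n rule: less_induct)
  case (less n)
  show ?case
  proof (cases n)
    case 0 then show ?thesis by simp
  next
    case (Suc m)
    show ?thesis
    proof (cases m)
      case 0 then show ?thesis using assms[of 0] Suc less.prems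
        by (simp add: numeral_2_eq_2)
    next
      case (Suc k)
      have h1: "y (k+2) = chebU' (k+2) x * y 1 - chebU' (k+1) x * y 0"
        using less.IH[of "k+1"] Suc \<open>n = Suc m\<close> less.prems by simp
      have h0: "y (k+1) = chebU' (k+1) x * y 1 - chebU' k x * y 0"
        using less.IH[of "k"] Suc \<open>n = Suc m\<close> less.prems by simp
      have h3: "y (k+3) = 2*x*y (k+2) - y (k+1)"
        using assms[of "k+1"] Suc \<open>n = Suc m\<close> less.prems by (simp add: numeral_3_eq_3 numeral_2_eq_2)
      have c3: "chebU' (k+3) x = 2*x*chebU' (k+2) x - chebU' (k+1) x"
        by (simp add: numeral_3_eq_3 numeral_2_eq_2)
      have c2: "chebU' (k+2) x = 2*x*chebU' (k+1) x - chebU' k x"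
        by (simp add: numeral_2_eq_2)
      have nn: "n + 1 = k + 3" "n = k + 2" using Suc \<open>n = Suc m\<close> by simp_all
      have "y (k+3) = chebU' (k+3) x * y 1 - chebU' (k+2) x * y 0"
        by (rule gen3[OF h3 c3 c2 h0 h1])
      then show ?thesis using nn by (simp add: numeral_3_eq_3 numeral_2_eq_2)
    qed
  qed
qed

lemma rec_yp:
  fixes yq yp :: "nat \<Rightarrow> complex"
  assumes "\<And>n. n < M \<Longrightarrow> yq (Suc n) = al * yq n + be * yp n \<and> yp (Suc n) = be' * yq n + al' * yp n"
    and "al * al' - be * be' = 1"
  shows "n + 2 \<le> M \<Longrightarrow> yp (n+2) = (al + al') * yp (n+1) - yp n"
proof -
  assume n: "n + 2 \<le> M"
  have a1: "yp (n+2) = be' * yq (n+1) + al' * yp (n+1)" using assms(1)[of "n+1"] n by simp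
  have a2: "yq (n+1) = al * yq n + be * yp n" using assms(1)[of n] n by simp
  have a3: "yp (n+1) = be' * yq n + al' * yp n" using assms(1)[of n] n by simp
  show ?thesis using a1 a2 a3 assms(2) by algebra
qed

lemma conserv:
  fixes q p al be :: complex
  assumes "al * cnj al - be * cnj be = 1"
  shows "(cmod (al*q + be*p))^2 - (cmod (cnj be * q + cnj al * p))^2 = (cmod q)^2 - (cmod p)^2"
proof -
  have "complex_of_real ((cmod (al*q + be*p))^2 - (cmod (cnj be * q + cnj al * p))^2)
     = (al*q + be*p) * cnj (al*q + be*p) - (cnj be * q + cnj al * p) * cnj (cnj be * q + cnj al * p)"
    by (simp only: of_real_diff complex_norm_square)
  also have "\<dots> = (al * cnj al - be * cnj be) * (q * cnj q - p * cnj p)"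
    by (simp add: algebra_simps)
  also have "\<dots> = complex_of_real ((cmod q)^2 - (cmod p)^2)"
    using assms by (simp only: of_real_diff complex_norm_square) simp
  finally show ?thesis using of_real_eq_iff by blast
qed


theorem mainTheorem4:
  fixes M :: nat and C :: "complex^2^2" and \<xi> :: real
    and sqrtDelta :: complex and \<phi> :: "int \<Rightarrow> complex^2"
  assumes "M \<ge> 1"
    and "unitary2 C"
    and "C$1$1 * C$1$2 * C$2$1 * C$2$2 \<noteq> 0"
    and "sqrtDelta ^ 2 = det C"
    and sol: "\<forall>x\<in>{0..<int M}. exp (- \<i> * of_real \<xi>) *s \<phi> x - EM M C \<phi> x
               = (if x = 0 then ketR else 0)"
  shows "let a = C$1$1; b = C$1$2; d = C$2$2;
             z = exp (- \<i> * of_real \<xi>);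
             \<omega> = z / sqrtDelta;
             T = (cmod (d * (\<phi> (int M - 1) $ 2)))\<^sup>2;
             R = (cmod (a * (\<phi> 0 $ 1) + b * (\<phi> 0 $ 2)))\<^sup>2;
             \<zeta> = chebU' M ((\<omega> + inverse \<omega>) / (2 * of_real (cmod a)))
         in complex_of_real T = of_real ((cmod a)\<^sup>2) / (of_real ((cmod a)\<^sup>2) + of_real ((cmod b)\<^sup>2) * \<zeta>\<^sup>2)
          \<and> complex_of_real R = of_real ((cmod b)\<^sup>2) * \<zeta>\<^sup>2 / (of_real ((cmod a)\<^sup>2) + of_real ((cmod b)\<^sup>2) * \<zeta>\<^sup>2)
          \<and> T + R = 1"
proof -
  define a where "a = C$1$1"
  define b where "b = C$1$2"
  define c where "c = C$2$1"
  define d where "d = C$2$2"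
  define z where "z = exp (- \<i> * of_real \<xi>)"
  define s where "s = sqrtDelta"
  define \<omega> where "\<omega> = z / s"
  define A where "A = cmod a"
  define \<Delta> where "\<Delta> = a*d - b*c"
  have U: "a * cnj a + b * cnj b = 1" "c * cnj a + d * cnj b = 0" "c*cnj c + d * cnj d = 1"
    using unitary_facts[OF assms(2)] by (simp_all add: a_def b_def c_def d_def)
  have nz: "a \<noteq> 0" "b \<noteq> 0" "c \<noteq> 0" "d \<noteq> 0"
    using assms(3) by (auto simp: a_def b_def c_def d_def)
  have s2: "s^2 = \<Delta>" using assms(4) by (simp add: s_def \<Delta>_def det_2 a_def b_def c_def d_def)
  have "\<Delta> * cnj a = d * (a*cnj a + b*cnj b) - b * (c*cnj a + d*cnj b)"
    by (simp add: \<Delta>_def algebra_simps)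
  then have dform: "d = \<Delta> * cnj a" using U by simp
  have "\<Delta> * cnj b = a * (c*cnj a + d*cnj b) - c * (a*cnj a + b*cnj b)"
    by (simp add: \<Delta>_def algebra_simps)
  then have cform: "c = - \<Delta> * cnj b" using U by simp
  have "c*cnj c + d * cnj d = (\<Delta> * cnj \<Delta>) * (a * cnj a + b * cnj b)"
    by (simp add: cform dform algebra_simps)
  then have DD: "\<Delta> * cnj \<Delta> = 1" using U by simp
  have Dnz: "\<Delta> \<noteq> 0" using DD by auto
  have nD: "cmod \<Delta> = 1"
  proof -
    have "complex_of_real ((cmod \<Delta>)^2) = 1" using DD complex_norm_square by metis
    then have "(cmod \<Delta>)^2 = 1" using of_real_eq_1_iff by blast
    then show ?thesis using norm_ge_zero[of \<Delta>] by (auto simp: power2_eq_1_iff)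
  qed
  have ns: "cmod s = 1"
  proof -
    have "(cmod s)^2 = 1" using nD s2 by (metis norm_power)
    then show ?thesis using norm_ge_zero[of s] by (auto simp: power2_eq_1_iff)
  qed
  have ss: "s * cnj s = 1" using ns complex_norm_square[of s] by simp
  have snz: "s \<noteq> 0" using ns by auto
  have nzz: "cmod z = 1" unfolding z_def
    using norm_exp_i_times[of "-\<xi>"] by simp
  have znz: "z \<noteq> 0" using nzz by auto
  have nw: "cmod \<omega> = 1" using nzz ns by (simp add: \<omega>_def norm_divide)
  have wnz: "\<omega> \<noteq> 0" using nw by auto
  have cw: "cnj \<omega> = inverse \<omega>"
  proof -
    have "\<omega> * cnj \<omega> = 1" using nw complex_norm_square[of \<omega>] by simp
    then show ?thesis by (simp add: field_simps wnz)
  qed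
  have Apos: "A > 0" using nz by (simp add: A_def)
  have aa: "a * cnj a = of_real (A^2)" unfolding A_def by (rule complex_norm_square[symmetric])
  have bb: "b * cnj b = of_real ((cmod b)^2)" by (rule complex_norm_square[symmetric])
  have AB: "A^2 + (cmod b)^2 = 1"
  proof -
    have "complex_of_real (A^2 + (cmod b)^2) = 1" using U(1) aa bb by simp
    then show ?thesis using of_real_eq_1_iff by blast
  qed
  define u where "u n = \<phi> (int n) $ 1" for n
  define v where "v n = \<phi> (int n) $ 2" for n
  have S: "z *s \<phi> (int n) - EM M C \<phi> (int n) = (if n = 0 then ketR else 0)" if "n < M" for n
    using sol that by (simp add: z_def)
  have E1: "z * u n = (if Suc n < M then a * u (Suc n) + b * v (Suc n) else 0)" if "n < M" for n
  proof -
    have "(z *s \<phi> (int n) - EM M C \<phi> (int n))$1 = 0"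
      using S[OF that] by (simp add: ketR_def)
    then show ?thesis using that
      by (auto simp: EM_def Pm_comp Qm_comp ext0_def u_def v_def a_def b_def add.commute)
  qed
  have E2: "z * v n = (if n = 0 then 1 else c * u (n-1) + d * v (n-1))" if "n < M" for n
  proof -
    have "(z *s \<phi> (int n) - EM M C \<phi> (int n))$2 = (if n = 0 then 1 else 0)"
      using S[OF that] by (simp add: ketR_def)
    then show ?thesis using that
      by (auto simp: EM_def Pm_comp Qm_comp ext0_def u_def v_def c_def d_def of_nat_diff)
  qed
  define xq where "xq n = (if n = 0 then 1 else c * u (n-1) + d * v (n-1))" for n
  define xp where "xp n = (if n = 0 then a * u 0 + b * v 0 else z * u (n-1))" for n
  have HQ: "xq n = z * v n" if "n < M" for n using E2[OF that] by (simp add: xq_def)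
  have HP: "xp n = a * u n + b * v n" if "n < M" for n
  proof (cases n)
    case 0 then show ?thesis by (simp add: xp_def)
  next
    case (Suc m) then show ?thesis using E1[of m] that by (simp add: xp_def)
  qed
  have RQ: "a * xq (Suc n) = c * xp n + (\<Delta>/z) * xq n" if "n < M" for n
    using HQ[OF that] HP[OF that] znz by (simp add: xq_def \<Delta>_def field_simps)
  have RP: "a * xp (Suc n) = z * xp n - b * xq n" if "n < M" for n
    using HQ[OF that] HP[OF that] by (simp add: xp_def algebra_simps)
  have Mm: "Suc (M - 1) = M" using assms(1) by simp
  have uM: "u (M-1) = 0" using E1[of "M-1"] Mm znz assms(1) by simp
  have xpM: "xp M = 0" using uM assms(1) by (simp add: xp_def)
  have xqM: "xq M = d * v (M-1)" using uM assms(1) by (simp add: xq_def)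
  have Tdef: "\<phi> (int M - 1) $ 2 = v (M-1)" using assms(1) by (simp add: v_def of_nat_diff)
  have Rdef: "a * (\<phi> 0 $ 1) + b * (\<phi> 0 $ 2) = xp 0" by (simp add: xp_def u_def v_def)
  define \<kappa> where "\<kappa> = s * of_real A / a"
  have knz: "\<kappa> \<noteq> 0" using snz nz Apos by (simp add: \<kappa>_def)
  have nk: "cmod \<kappa> = 1" using ns Apos by (simp add: \<kappa>_def norm_divide norm_mult A_def)
  define yq where "yq n = xq n / \<kappa>^n" for n
  define yp where "yp n = xp n / \<kappa>^n" for n
  define al where "al = inverse \<omega> / of_real A"
  define al' where "al' = \<omega> / of_real A"
  define be where "be = c / (s * of_real A)"
  define be' where "be' = - b / (s * of_real A)"
  have Anz: "complex_of_real A \<noteq> 0" using Apos by simp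
  have ak: "a * \<kappa> = s * of_real A" using nz by (simp add: \<kappa>_def)
  have REC: "yq (Suc n) = al * yq n + be * yp n \<and> yp (Suc n) = be' * yq n + al' * yp n"
    if "n < M" for n
  proof
    have "yq (Suc n) = (a * xq (Suc n)) / ((a * \<kappa>) * \<kappa>^n)"
      using nz by (simp add: yq_def)
    also have "\<dots> = (c * xp n + (\<Delta>/z) * xq n) / (s * of_real A * \<kappa>^n)"
      using RQ[OF that] ak by simp
    also have "\<dots> = al * yq n + be * yp n"
      using snz znz Anz knz s2 unfolding al_def be_def yq_def yp_def \<omega>_def
      by (simp add: field_simps power2_eq_square)
    finally show "yq (Suc n) = al * yq n + be * yp n" .
    have "yp (Suc n) = (a * xp (Suc n)) / ((a * \<kappa>) * \<kappa>^n)"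
      using nz by (simp add: yp_def)
    also have "\<dots> = (z * xp n - b * xq n) / (s * of_real A * \<kappa>^n)"
      using RP[OF that] ak by simp
    also have "\<dots> = be' * yq n + al' * yp n"
      using snz znz Anz knz unfolding al'_def be'_def yq_def yp_def \<omega>_def
      by (simp add: field_simps)
    finally show "yp (Suc n) = be' * yq n + al' * yp n" .
  qed
  have DET: "al * al' - be * be' = 1"
  proof -
    have "al * al' - be * be' = (1 + b * c / \<Delta>) / of_real (A^2)"
      using wnz snz Anz s2 Dnz unfolding al_def al'_def be_def be'_def
      by (simp add: field_simps power2_eq_square)
    also have "\<dots> = (a * d / \<Delta>) / of_real (A^2)"
    proof -
      have "\<Delta> + b*c = a*d" by (simp add: \<Delta>_def)
      then have "1 + b * c / \<Delta> = a * d / \<Delta>" using Dnz by (simp add: field_simps)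
      then show ?thesis by simp
    qed
    also have "\<dots> = 1" using dform aa Apos s2 snz Dnz by (simp add: field_simps power2_eq_square)
    finally show ?thesis .
  qed
  have CA: "cnj al = al'" using cw wnz by (simp add: al_def al'_def)
  have CB: "cnj be = be'"
  proof -
    have sD: "s * cnj \<Delta> = cnj s"
    proof -
      have "s * (s * cnj \<Delta>) = s * cnj s" using ss DD s2 by (simp add: power2_eq_square mult.assoc[symmetric])
      then show ?thesis using snz by simp
    qed
    have "cnj be = - cnj \<Delta> * b / (cnj s * of_real A)" by (simp add: be_def cform)
    also have "\<dots> = be'" using ss DD s2 snz Anz sD unfolding be'_def
      by (simp add: field_simps power2_eq_square)
    finally show ?thesis .
  qed
  define x0 where "x0 = (\<omega> + inverse \<omega>) / (2 * of_real A)"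
  define xr where "xr = Re \<omega> / A"
  have x0r: "x0 = of_real xr"
  proof -
    have "\<omega> + inverse \<omega> = of_real (2 * Re \<omega>)" using complex_add_cnj[of \<omega>] cw by simp
    then show ?thesis using Apos by (simp add: x0_def xr_def)
  qed
  have TR: "al + al' = 2 * x0" using Anz by (simp add: al_def al'_def x0_def field_simps)
  have rec2: "yp (n+2) = 2 * x0 * yp (n+1) - yp n" if "n + 2 \<le> M" for n
    using rec_yp[of M yq al be yp be' al', OF REC DET that] TR by simp
  have yM: "yp M = chebU' M x0 * yp 1 - chebU' (M-1) x0 * yp 0"
    using twoterm[of M yp x0 "M-1", OF rec2] Mm by simp
  define p0 where "p0 = xp 0"
  have yp0: "yp 0 = p0" by (simp add: yp_def p0_def)
  have yq0: "yq 0 = 1" by (simp add: yq_def xq_def)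
  have yp1: "yp 1 = be' + al' * p0" using REC[of 0] assms(1) yp0 yq0 by simp
  have ypM: "yp M = 0" by (simp add: yp_def xpM)
  define zr where "zr = chebR M xr"
  define ur where "ur = chebR (M-1) xr"
  have eqn: "of_real zr * (be' + al' * p0) = of_real ur * p0"
    using yM ypM yp1 yp0 by (simp add: x0r chebU'_real zr_def ur_def)
  have eqn2: "p0 * (of_real zr * \<omega> - of_real (A * ur)) = of_real zr * b / s"
  proof -
    have "of_real A * (of_real zr * (be' + al' * p0)) = of_real A * (of_real ur * p0)"
      using eqn by simp
    then show ?thesis using Anz snz unfolding be'_def al'_def
      by (simp add: field_simps)
  qed
  have cas: "zr^2 - 2*xr*zr*ur + ur^2 = 1"
    using cassini[of "M-1" xr] Mm by (simp add: zr_def ur_def)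
  have Rew: "Re \<omega> = A * xr" using Apos by (simp add: xr_def)
  have w2: "(Re \<omega>)^2 + (Im \<omega>)^2 = 1" using nw by (simp add: cmod_def)
  have Nden: "(cmod (of_real zr * \<omega> - of_real (A * ur)))^2 = A^2 + (cmod b)^2 * zr^2"
  proof -
    have "(cmod (of_real zr * \<omega> - of_real (A * ur)))^2
        = (zr * Re \<omega> - A * ur)^2 + (zr * Im \<omega>)^2"
      by (simp add: cmod_def)
    also have "\<dots> = zr^2 * ((Re \<omega>)^2 + (Im \<omega>)^2) - 2 * zr * A * ur * Re \<omega> + A^2 * ur^2"
      by (simp add: power2_eq_square algebra_simps)
    also have "\<dots> = zr^2 + A^2 * (ur^2 - 2*xr*zr*ur)"
      using w2 Rew by (simp add: power2_eq_square algebra_simps)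
    also have "\<dots> = zr^2 + A^2 * (1 - zr^2)"
    proof -
      have c2: "ur^2 - 2*xr*zr*ur = 1 - zr^2" using cas by linarith
      show ?thesis by (simp only: c2)
    qed
    also have "\<dots> = A^2 + (1 - A^2) * zr^2" by (simp add: algebra_simps)
    also have "\<dots> = A^2 + (cmod b)^2 * zr^2" using AB by simp
    finally show ?thesis .
  qed
  define Dn where "Dn = A^2 + (cmod b)^2 * zr^2"
  have Dnp: "Dn > 0" using Apos by (simp add: Dn_def add_pos_nonneg)
  have Rval: "(cmod p0)^2 = (cmod b)^2 * zr^2 / Dn"
  proof -
    have "(cmod p0)^2 * Dn = (cmod b)^2 * zr^2"
    proof -
      have "cmod p0 * cmod (of_real zr * \<omega> - of_real (A * ur)) = \<bar>zr\<bar> * cmod b"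
        using arg_cong[OF eqn2, of cmod] ns by (simp add: norm_mult norm_divide)
      then have "(cmod p0)^2 * (cmod (of_real zr * \<omega> - of_real (A * ur)))^2 = zr^2 * (cmod b)^2"
        by (metis power_mult_distrib power2_abs)
      then show ?thesis using Nden by (simp add: Dn_def mult.commute)
    qed
    then show ?thesis using Dnp by (simp add: field_simps)
  qed
  have cons: "(cmod (yq n))^2 - (cmod (yp n))^2 = 1 - (cmod p0)^2" if "n \<le> M" for n
    using that
  proof (induction n)
    case 0 then show ?case by (simp add: yq0 yp0)
  next
    case (Suc n)
    then have "n < M" by simp
    then have "(cmod (yq (Suc n)))^2 - (cmod (yp (Suc n)))^2 = (cmod (yq n))^2 - (cmod (yp n))^2"
      using REC[of n] conserv[of al be "yq n" "yp n"] DET CA CB by simp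
    then show ?case using Suc by simp
  qed
  have Tval: "(cmod (xq M))^2 = 1 - (cmod p0)^2"
  proof -
    have "cmod (yq M) = cmod (xq M)" using nk by (simp add: yq_def norm_divide norm_power)
    then show ?thesis using cons[of M] ypM by simp
  qed
  have T1: "(cmod (d * \<phi> (int M - 1) $ 2))^2 = A^2 / Dn"
    using Tval Rval xqM Tdef Dnp by (simp add: Dn_def field_simps)
  have R1: "(cmod (a * \<phi> 0 $ 1 + b * \<phi> 0 $ 2))^2 = (cmod b)^2 * zr^2 / Dn"
    using Rval Rdef p0_def by simp
  have zeta: "chebU' M ((\<omega> + inverse \<omega>) / (2 * of_real A)) = of_real zr"
    using x0r x0_def by (simp add: chebU'_real zr_def)
  have den: "complex_of_real (A^2) + complex_of_real ((cmod b)^2) * (complex_of_real zr)^2 = complex_of_real Dn"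
    by (simp add: Dn_def)
  show ?thesis
    unfolding Let_def a_def[symmetric] b_def[symmetric] d_def[symmetric] z_def[symmetric]
      s_def[symmetric] \<omega>_def[symmetric] A_def[symmetric] zeta T1 R1 den
  proof (intro conjI)
    show "complex_of_real (A\<^sup>2 / Dn) = complex_of_real (A\<^sup>2) / complex_of_real Dn"
      by (rule of_real_divide)
    show "complex_of_real ((cmod b)\<^sup>2 * zr\<^sup>2 / Dn) = complex_of_real ((cmod b)\<^sup>2) * (complex_of_real zr)\<^sup>2 / complex_of_real Dn"
      by simp
    have "A\<^sup>2 / Dn + (cmod b)\<^sup>2 * zr\<^sup>2 / Dn = Dn / Dn"
      unfolding Dn_def by (rule add_divide_distrib[symmetric])
    then show "A\<^sup>2 / Dn + (cmod b)\<^sup>2 * zr\<^sup>2 / Dn = 1" using Dnp by simp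
  qed
qed
end
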